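(* Let $\Gamma$ and the data $s_0,\eta_0,\Xi$ be as in the context and let $B\subset\mathbb R^{n-1}$ be a fixed closed ball. There is a constant $c>0$ such that for any two distinct cusps $\gamma_1\xi_1\infty,\gamma_2\xi_2\infty\in B$ ($\gamma_i\in\Gamma$, $\xi_i\in\Xi$), $$\|\gamma_1\xi_1\infty-\gamma_2\xi_2\infty\|\ge\frac{c}{\sqrt{h(\gamma_1\xi_1\infty)\,h(\gamma_2\xi_2\infty)}}.$$
   Context: $n\ge2$, $G=\mathrm{SO}(n,1)$, $K\cong\mathrm{SO}(n)$ maximal compact. $A=\{a(t)\}$ a one-parameter $\mathbb R$-split torus with $\mathfrak g=\mathfrak g_{-1}\oplus\mathfrak z(A)\oplus\mathfrak g_{+1}$, $\mathrm{Ad}(a(t))=e^{\pm t}$ on $\mathfrak g_{\pm1}$; $M=Z_G(A)\cap K$, $N=\exp\mathfrak g_{+1}$, $\mathfrak g_{+1}\cong\mathbb R^{n-1}$ with $\mathrm{Ad}(M)$-invariant Euclidean norm $\|\cdot\|$, $u(\mathbf x)=\exp\mathbf x$; $\sigma\in K$ with $\sigma^2=e$, $\sigma a(t)\sigma^{-1}=a(-t)$; $P=MAN$. Each $g\in G\setminus P$ is $g=u(\mathbf x)\sigma ma(r)u(\mathbf y)$ with $\mathbf x,r$ unique; $\partial\mathbb H^n\cong\mathbb R^{n-1}\cup\{\infty\}$ via $u(\mathbf x)\sigma P\mapsto\mathbf x$, $P\mapsto\infty$. $\Omega(\eta,s)=\eta\{a(t):t\ge s\}K$. $\Gamma$ discrete,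 finite covolume, $\Gamma\backslash\mathbb H^n$ non-compact, with fixed $s_0>0$, compact $\eta_0\subset N$, finite $\Xi\ni e$ satisfying: (i) $G=\Gamma\Xi\Omega(\eta_0,s_0)$; (ii) $\Gamma\cap\xi N\xi^{-1}$ cocompact in $\xi N\xi^{-1}$; (iii) for compact $\eta$, $\{\gamma:\gamma\Xi\Omega(\eta,s_0)\cap\Omega(\eta,s_0)\ne\emptyset\}$ finite; (iv) for compact $\eta\supseteq\eta_0$ some $s_1>s_0$ with $\gamma\xi_1\Omega(\eta,s_0)\cap\xi_2\Omega(\eta,s_1)\ne\emptyset\Rightarrow\xi_1=\xi_2,\gamma\in\xi_1NM\xi_1^{-1}$. Height: for $\gamma\xi=u(\mathbf x_1)\sigma ma(r)u(\mathbf y)$, $\gamma\xi\infty=\mathbf x_1$ and $h(\gamma\xi\infty)=e^r$. *)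

theory Defs
  imports "HOL-Analysis.Analysis"
begin

text \<open>Concrete model of G = SO(n,1) (identity component).  The space
  R^{n-1} is an arbitrary Euclidean space 'v (so n - 1 = DIM('v) >= 1, i.e. n >= 2),
  and G acts linearly on R x 'v x R = R^{n+1}, preserving the quadratic form
  Q(p,v,q) = 2pq - |v|^2 of signature (1,n).  Group elements are maps, the group
  law is composition, the identity is id; topology on maps is the product
  (pointwise) topology, which on linear maps is the usual matrix topology.\<close>

type_synonym 'v pt = "real \<times> 'v \<times> real"
type_synonym 'v grp = "'v pt \<Rightarrow> 'v pt"

definition lorQ :: "('v::euclidean_space) pt \<Rightarrow> real" where
  "lorQ w = (case w of (p, v, q) \<Rightarrow> 2 * p * q - (norm v)^2)"

definition OQ :: "('v::euclidean_space) grp set" where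
  "OQ = {L. linear L \<and> (\<forall>w. lorQ (L w) = lorQ w)}"

definition Gr :: "('v::euclidean_space) grp set" where
  "Gr = connected_component_set OQ id"

definition ator :: "real \<Rightarrow> ('v::euclidean_space) grp" where
  "ator t = (\<lambda>(p, v, q). (exp t * p, v, exp (- t) * q))"

definition uN :: "('v::euclidean_space) \<Rightarrow> 'v grp" where
  "uN x = (\<lambda>(p, v, q). (p + x \<bullet> v + (norm x)^2 / 2 * q, v + q *\<^sub>R x, q))"

definition Nu :: "('v::euclidean_space) grp set" where
  "Nu = range uN"

definition Kc :: "('v::euclidean_space) grp set" where
  "Kc = {g \<in> Gr. g (1, 0, 1) = (1, 0, 1)}"

definition Mc :: "('v::euclidean_space) grp set" where
  "Mc = {m \<in> Kc. \<forall>t. m \<circ> ator t = ator t \<circ> m}"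

text \<open>sigma in K with sigma^2 = e and sigma a(t) sigma^{-1} = a(-t):
  swap the two null coordinates and reflect 'v in a basis hyperplane.\<close>
definition reflv :: "('v::euclidean_space) \<Rightarrow> 'v" where
  "reflv v = v - (2 * (v \<bullet> (SOME b. b \<in> (Basis::'v set)))) *\<^sub>R (SOME b. b \<in> (Basis::'v set))"

definition sigm :: "('v::euclidean_space) grp" where
  "sigm = (\<lambda>(p, v, q). (q, reflv v, p))"

definition Omega :: "('v::euclidean_space) grp set \<Rightarrow> real \<Rightarrow> 'v grp set" where
  "Omega eta s = {h \<circ> ator t \<circ> k | h t k. h \<in> eta \<and> s \<le> t \<and> k \<in> Kc}"

text \<open>Bruhat coordinates: g = u(x) sigma m a(r) u(y) with m in M.  For g outside
  P = MAN these exist, and x, r are unique; x is the boundary point g infinity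
  and e^r is its height.\<close>
definition bruhat_coords :: "('v::euclidean_space) grp \<Rightarrow> 'v \<Rightarrow> real \<Rightarrow> bool" where
  "bruhat_coords g x r \<longleftrightarrow> (\<exists>m \<in> Mc. \<exists>y. g = uN x \<circ> sigm \<circ> m \<circ> ator r \<circ> uN y)"

definition is_subgroup :: "('v::euclidean_space) grp set \<Rightarrow> bool" where
  "is_subgroup H \<longleftrightarrow> H \<subseteq> Gr \<and> id \<in> H \<and> (\<forall>g\<in>H. \<forall>h\<in>H. g \<circ> h \<in> H)
     \<and> (\<forall>g\<in>H. inv g \<in> H)"

definition discrete_set :: "('v::euclidean_space) grp set \<Rightarrow> bool" where
  "discrete_set H \<longleftrightarrow> (\<forall>g\<in>H. \<exists>U. open U \<and> U \<inter> H = {g})"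

definition conjN :: "('v::euclidean_space) grp \<Rightarrow> 'v grp set" where
  "conjN xi = {xi \<circ> h \<circ> inv xi | h. h \<in> Nu}"

definition conjNM :: "('v::euclidean_space) grp \<Rightarrow> 'v grp set" where
  "conjNM xi = {xi \<circ> h \<circ> m \<circ> inv xi | h m. h \<in> Nu \<and> m \<in> Mc}"

definition cocompact_in :: "('v::euclidean_space) grp set \<Rightarrow> 'v grp set \<Rightarrow> bool" where
  "cocompact_in H L \<longleftrightarrow> (\<exists>C. compact C \<and> C \<subseteq> L \<and> L = {h \<circ> c | h c. h \<in> H \<and> c \<in> C})"

end

theory Submission
  imports Defs
begin

definition bil :: "('v::euclidean_space) pt \<Rightarrow> 'v pt \<Rightarrow> real" where
  "bil w u = (case w of (p, v, q) \<Rightarrow> case u of (p', v', q') \<Rightarrow> p * q' + p' * q - v \<bullet> v')"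

lemma bil_polar: "bil w u = (lorQ (w + u) - lorQ w - lorQ u) / 2"
  by (cases w; cases u) (auto simp: bil_def lorQ_def power2_norm_eq_inner algebra_simps inner_commute)

lemma OQ_bil: assumes "L \<in> OQ" shows "bil (L w) (L u) = bil w u"
proof -
  have "linear L" "\<And>w. lorQ (L w) = lorQ w" using assms by (auto simp: OQ_def)
  then show ?thesis by (simp add: bil_polar flip: linear_add)
qed

lemma bil_nondeg: assumes "\<And>u. bil w u = 0" shows "w = (0::('v::euclidean_space) pt)"
proof (cases w)
  case (fields p v q)
  have "bil w (1,0,0) = 0" "bil w (0,0,1) = 0" "bil w (0,v,0) = 0" using assms by auto
  then show ?thesis using fields by (auto simp: bil_def zero_prod_def)
qed

lemma OQ_inj: assumes "L \<in> OQ" shows "inj L"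
proof -
  have lin: "linear L" using assms by (auto simp: OQ_def)
  show ?thesis
  proof (rule linear_injective_0[OF lin, THEN iffD2], intro allI impI)
    fix w assume "L w = 0"
    then have "\<And>u. bil w u = 0" using OQ_bil[OF assms, of w] by (simp add: bil_def lin linear_0 zero_prod_def)
    then show "w = 0" by (rule bil_nondeg)
  qed
qed

lemma OQ_surj: assumes "L \<in> OQ" shows "surj L"
  using assms OQ_inj linear_injective_imp_surjective by (auto simp: OQ_def)

lemma OQ_inv_left: "L \<in> OQ \<Longrightarrow> inv L (L w) = w"
  by (simp add: OQ_inj)
lemma OQ_inv_right: "L \<in> OQ \<Longrightarrow> L (inv L w) = w"
  by (simp add: OQ_surj surj_f_inv_f)
lemma OQ_inv_comp: "L \<in> OQ \<Longrightarrow> inv L \<circ> L = id" "L \<in> OQ \<Longrightarrow> L \<circ> inv L = id"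
  by (auto simp: OQ_inv_left OQ_inv_right fun_eq_iff)

lemma OQ_inv: assumes "L \<in> OQ" shows "inv L \<in> OQ"
proof -
  have "linear L" using assms by (auto simp: OQ_def)
  then have bl: "bounded_linear L" by (simp add: linear_conv_bounded_linear)
  have "bounded_linear (inv L)" by (rule inj_linear_imp_inv_bounded_linear[OF bl OQ_inj[OF assms]])
  moreover have "lorQ (inv L w) = lorQ w" for w
  proof -
    have "lorQ (inv L w) = lorQ (L (inv L w))" using assms by (simp add: OQ_def del: split_paired_All)
    also have "\<dots> = lorQ w" by (simp add: OQ_inv_right[OF assms])
    finally show ?thesis .
  qed
  ultimately show ?thesis by (simp add: OQ_def bounded_linear.linear)
qed

lemma OQ_comp: "L \<in> OQ \<Longrightarrow> M \<in> OQ \<Longrightarrow> L \<circ> M \<in> OQ"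
  by (simp add: OQ_def linear_compose del: split_paired_All)

lemma OQ_id: "id \<in> OQ" by (simp add: OQ_def linear_ident id_def)

lemma cont_left: assumes "linear (L::('v::euclidean_space) pt \<Rightarrow> 'v pt)"
  shows "continuous_on UNIV (\<lambda>x::'v grp. L \<circ> x)"
proof (rule continuous_on_coordinatewise_then_product)
  fix i
  have "continuous_on UNIV L" using assms linear_continuous_on linear_conv_bounded_linear by blast
  then show "continuous_on UNIV (\<lambda>x::'v grp. (L \<circ> x) i)"
    by (simp add: o_def) (rule continuous_on_compose2[where g=L and t=UNIV, OF _ continuous_on_product_coordinates]; simp)
qed

lemma cont_right: "continuous_on UNIV (\<lambda>x::('v::euclidean_space) grp. x \<circ> L)"
  by (rule continuous_on_coordinatewise_then_product) (simp add: o_def)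

lemma Gr_OQ: "Gr \<subseteq> OQ" by (simp add: Gr_def connected_component_subset)
lemma id_Gr: "id \<in> Gr" by (simp add: Gr_def OQ_id)

lemma Gr_comp: assumes g: "g \<in> Gr" and h: "h \<in> Gr" shows "g \<circ> h \<in> Gr"
proof -
  have gO: "g \<in> OQ" using g Gr_OQ by blast
  have lin: "linear g" using gO by (simp add: OQ_def)
  let ?T = "(\<lambda>x. g \<circ> x) ` Gr"
  have "connected ?T" unfolding Gr_def
    by (rule connected_continuous_image[OF continuous_on_subset[OF cont_left[OF lin]]]) auto
  moreover have "g \<in> ?T" using id_Gr by (metis comp_id image_eqI)
  moreover have "?T \<subseteq> OQ" using Gr_OQ gO OQ_comp by blast
  ultimately have "?T \<subseteq> connected_component_set OQ g" by (simp add: connected_component_maximal)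
  also have "\<dots> = Gr" using g unfolding Gr_def by (rule connected_component_eq)
  finally show ?thesis using h by blast
qed

lemma Gr_inv: assumes g: "g \<in> Gr" shows "inv g \<in> Gr"
proof -
  have gO: "g \<in> OQ" using g Gr_OQ by blast
  have iO: "inv g \<in> OQ" using OQ_inv[OF gO] .
  have lin: "linear (inv g)" using iO by (simp add: OQ_def)
  let ?T = "(\<lambda>x. inv g \<circ> x) ` Gr"
  have "connected ?T" unfolding Gr_def
    by (rule connected_continuous_image[OF continuous_on_subset[OF cont_left[OF lin]]]) auto
  moreover have "inv g \<in> ?T" using id_Gr by (metis comp_id image_eqI)
  moreover have "?T \<subseteq> OQ" using Gr_OQ iO OQ_comp by blast
  ultimately have T: "?T \<subseteq> connected_component_set OQ (inv g)" by (simp add: connected_component_maximal)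
  have "id \<in> ?T" using g OQ_inv_comp(1)[OF gO] by (metis image_eqI)
  then have "id \<in> connected_component_set OQ (inv g)" using T by blast
  then have "connected_component_set OQ id = connected_component_set OQ (inv g)"
    by (rule connected_component_eq)
  then show ?thesis using iO by (simp add: Gr_def)
qed

lemma path_Gr:
  assumes c: "continuous_on {0..1::real} f" and f0: "f 0 = id" and fO: "f ` {0..1} \<subseteq> OQ"
  shows "f 1 \<in> Gr"
proof -
  have "connected (f ` {0..1})" by (rule connected_continuous_image[OF c]) simp
  moreover have "id \<in> f ` {0..1}" using f0 by (metis atLeastAtMost_iff image_eqI order_refl zero_le_one)
  ultimately have "f ` {0..1} \<subseteq> Gr" unfolding Gr_def using fO by (simp add: connected_component_maximal)
  then show ?thesis by auto
qed

lemma linear_uN: "linear (uN z)"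
  by (rule linearI) (auto simp: uN_def algebra_simps inner_add_right split: prod.splits)

lemma lorQ_uN: "lorQ (uN z w) = lorQ w"
  by (cases w) (simp add: uN_def lorQ_def power2_norm_eq_inner inner_add_left inner_add_right inner_commute algebra_simps)

lemma uN_OQ: "uN z \<in> OQ" by (simp add: OQ_def linear_uN lorQ_uN)

lemma uN_0: "uN 0 = id" by (auto simp: uN_def fun_eq_iff)

lemma uN_Gr: "uN z \<in> Gr"
proof -
  have "(\<lambda>s::real. uN (s *\<^sub>R z)) 1 \<in> Gr"
  proof (rule path_Gr[where f="\<lambda>s::real. uN (s *\<^sub>R z)"])
    show "continuous_on {0..1} (\<lambda>s::real. uN (s *\<^sub>R z))"
    proof (rule continuous_on_coordinatewise_then_product)
      fix w :: "'a pt" obtain p v q where w: "w = (p,v,q)" by (cases w)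
      show "continuous_on {0..1} (\<lambda>s::real. uN (s *\<^sub>R z) w)"
        unfolding w uN_def by (simp add: case_prod_beta) (intro continuous_intros; simp)
    qed
  qed (auto simp: uN_0 uN_OQ)
  then show ?thesis by simp
qed

lemma linear_ator: "linear (ator t)"
  by (rule linearI) (auto simp: ator_def algebra_simps split: prod.splits)

lemma lorQ_ator: "lorQ (ator t w) = lorQ w"
  by (cases w) (auto simp: ator_def lorQ_def algebra_simps exp_minus field_simps)

lemma ator_OQ: "ator t \<in> OQ" by (simp add: OQ_def linear_ator lorQ_ator)

lemma ator_0: "ator 0 = id" by (auto simp: ator_def fun_eq_iff)

lemma ator_Gr: "ator t \<in> (Gr :: ('v::euclidean_space) grp set)"
proof -
  have "(\<lambda>s::real. ator (s * t) :: 'v grp) 1 \<in> Gr"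
  proof (rule path_Gr[where f="\<lambda>s::real. ator (s * t) :: 'v grp"])
    show "continuous_on {0..1} (\<lambda>s::real. ator (s * t) :: 'v grp)"
    proof (rule continuous_on_coordinatewise_then_product)
      fix w :: "'v pt" obtain p v q where w: "w = (p,v,q)" by (cases w)
      show "continuous_on {0..1} (\<lambda>s::real. ator (s * t) w)"
        unfolding w ator_def by (simp add: case_prod_beta) (intro continuous_intros; simp)
    qed
  qed (auto simp: ator_0 ator_OQ)
  then show ?thesis by simp
qed

lemma Mc_e: assumes m: "m \<in> Mc" shows "m (1,0,0) = ((1,0,0) :: ('v::euclidean_space) pt)"
proof -
  have mG: "m \<in> Gr" and mo: "m (1,0,1) = ((1,0,1)::'v pt)" and comm: "\<And>t. m \<circ> ator t = ator t \<circ> m"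
    using m by (auto simp: Mc_def Kc_def)
  have lin: "linear m" using mG Gr_OQ by (auto simp: OQ_def)
  obtain a v c where me: "m (1,0,0) = (a,v,c)" by (cases "m (1,0,0)")
  obtain a' v' c' where mf: "m (0,0,1) = (a',v',c')" by (cases "m (0,0,1)")
  have "ator 1 (1,0,0) = exp 1 *\<^sub>R ((1,0,0)::'v pt)" by (simp add: ator_def)
  then have "m (ator 1 (1,0,0)) = exp 1 *\<^sub>R m (1,0,0)" by (metis linear_scale[OF lin])
  moreover have "m (ator 1 (1,0,0)) = ator 1 (m (1,0,0))" using comm[of 1] by (metis comp_apply)
  ultimately have h1: "(exp 1 * a, v, exp (-1) * c) = (exp 1 * a, exp 1 *\<^sub>R v, exp 1 * c)"
    by (simp add: me ator_def)
  have "ator 1 (0,0,1) = exp (-1) *\<^sub>R ((0,0,1)::'v pt)" by (simp add: ator_def)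
  then have "m (ator 1 (0,0,1)) = exp (-1) *\<^sub>R m (0,0,1)" by (metis linear_scale[OF lin])
  moreover have "m (ator 1 (0,0,1)) = ator 1 (m (0,0,1))" using comm[of 1] by (metis comp_apply)
  ultimately have h2: "(exp 1 * a', v', exp (-1) * c') = (exp (-1) * a', exp (-1) *\<^sub>R v', exp (-1) * c')"
    by (simp add: mf ator_def)
  have "exp (-1::real) \<noteq> exp 1" by simp
  have "c = 0" "a' = 0" "v = exp 1 *\<^sub>R v" using h1 h2 by auto
  moreover have "v = 0"
  proof -
    have "(exp 1 - 1) *\<^sub>R v = 0" using \<open>v = exp 1 *\<^sub>R v\<close> by (simp add: algebra_simps)
    moreover have "exp 1 - 1 \<noteq> (0::real)" by simp
    ultimately show ?thesis by simp
  qed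
  moreover have "(1,0,1) = m (1,0,0) + m ((0,0,1)::'v pt)"
    using mo by (simp add: flip: linear_add[OF lin])
  ultimately show ?thesis using me mf by simp
qed

lemma Nu_e: "h \<in> Nu \<Longrightarrow> h (1,0,0) = (1,0,0)"
  by (auto simp: Nu_def uN_def)

lemma reflv_0: "reflv 0 = 0" by (simp add: reflv_def)

lemma bruhat_e: fixes x :: "'v::euclidean_space" assumes "bruhat_coords g x r"
  shows "g (1,0,0) = (exp r * (norm x)^2 / 2, exp r *\<^sub>R x, exp r)"
proof -
  obtain m y where m: "m \<in> Mc" and g: "g = uN x \<circ> sigm \<circ> m \<circ> ator r \<circ> uN y"
    using assms by (auto simp: bruhat_coords_def)
  have lin: "linear m" using m Gr_OQ by (auto simp: Mc_def Kc_def OQ_def)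
  have "uN y (1,0,0) = ((1,0,0)::'v pt)" by (simp add: uN_def)
  moreover have "ator r (1,0,0) = exp r *\<^sub>R ((1,0,0)::'v pt)" by (simp add: ator_def)
  moreover have "m (exp r *\<^sub>R (1,0,0)) = exp r *\<^sub>R ((1,0,0)::'v pt)"
    using Mc_e[OF m] linear_scale[OF lin] by metis
  ultimately have "(m \<circ> ator r \<circ> uN y) (1,0,0) = exp r *\<^sub>R ((1, 0, 0)::'v pt)" by (simp del: scaleR_Pair)
  then show ?thesis by (simp add: g sigm_def reflv_0 uN_def)
qed

lemma bil_sym: "bil w u = bil u w"
  by (cases w; cases u) (simp add: bil_def inner_commute)
lemma bil_add: "bil (w1 + w2) u = bil w1 u + bil w2 u"
  by (cases w1; cases w2; cases u) (simp add: bil_def inner_add_left algebra_simps)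
lemma bil_scale: "bil (a *\<^sub>R w) u = a * bil w u"
  by (cases w; cases u) (simp add: bil_def algebra_simps)
lemma lorQ_bil: "lorQ w = bil w w"
  by (cases w) (simp add: bil_def lorQ_def power2_norm_eq_inner)
lemma bil_e: "bil (p,v,q) (1,0,0) = q"
  by (simp add: bil_def)

lemma null_bil:
  "bil ((a * (norm x)^2 / 2, a *\<^sub>R x, a)::('v::euclidean_space) pt) (b * (norm y)^2 / 2, b *\<^sub>R y, b)
    = a * b * (norm (x - y))^2 / 2"
proof -
  have "(norm (x - y))^2 = (norm x)^2 + (norm y)^2 - 2 * (x \<bullet> y)"
    by (simp add: power2_norm_eq_inner inner_diff_left inner_diff_right inner_commute)
  moreover have "bil ((a * (norm x)^2 / 2, a *\<^sub>R x, a)::('v::euclidean_space) pt) (b * (norm y)^2 / 2, b *\<^sub>R y, b)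
    = a * b * ((norm x)^2 + (norm y)^2 - 2 * (x \<bullet> y)) / 2"
    by (simp add: bil_def field_simps)
  ultimately show ?thesis by simp
qed

lemma null_lorQ: "lorQ ((a * (norm x)^2 / 2, a *\<^sub>R x, a)::('v::euclidean_space) pt) = 0"
  using null_bil[of a x a x] by (simp add: lorQ_bil)

lemma rep_point: assumes "lorQ (w::('v::euclidean_space) pt) = 2" and "bil w (1,0,0) = q" and "q > 0"
  shows "\<exists>z. w = uN z (ator (- ln q) (1,0,1))"
proof -
  obtain p v q' where w: "w = (p,v,q')" by (cases w)
  have q: "q' = q" using assms(2) by (simp add: w bil_e)
  have "2 * p * q - (norm v)^2 = 2" using assms(1) by (simp add: w q lorQ_def)
  then have p: "p = (2 + (norm v)^2) / (2 * q)" using assms(3) by (simp add: field_simps)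
  have e1: "exp (- ln q) = 1/q" using assms(3) by (simp add: exp_minus inverse_eq_divide)
  have e2: "exp (- (- ln q)) = q" using assms(3) by simp
  have a: "ator (- ln q) (1,0,1) = ((1/q, 0, q) :: 'v pt)" using assms(3) by (simp add: ator_def e1 e2)
  have nz: "(norm ((1/q) *\<^sub>R v))^2 = (norm v)^2 / q^2" using assms(3) by (simp add: power_divide)
  have "uN ((1/q) *\<^sub>R v) (1/q, 0, q) = (1/q + (norm ((1/q) *\<^sub>R v))^2 / 2 * q, q *\<^sub>R ((1/q) *\<^sub>R v), q)"
    by (simp add: uN_def)
  also have "\<dots> = (p, v, q)" using assms(3) unfolding nz by (simp add: p power2_eq_square field_simps)
  finally have "w = uN ((1/q) *\<^sub>R v) (ator (- ln q) (1,0,1))" by (simp add: a w q)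
  then show ?thesis by blast
qed

lemma cont_conj: assumes "linear (L::('v::euclidean_space) pt \<Rightarrow> 'v pt)"
  shows "continuous_on S (\<lambda>c::'v grp. L \<circ> c \<circ> M)"
proof (rule continuous_on_coordinatewise_then_product)
  fix i
  have cL: "continuous_on UNIV L" using assms linear_continuous_on linear_conv_bounded_linear by blast
  have "continuous_on UNIV (\<lambda>c::'v grp. c (M i))" by simp
  then have "continuous_on UNIV (\<lambda>c::'v grp. L (c (M i)))"
    by (rule continuous_on_compose2[OF cL]) simp
  then show "continuous_on S (\<lambda>c::'v grp. (L \<circ> c \<circ> M) i)"
    unfolding o_def by (rule continuous_on_subset) simp
qed


lemma bil_add_r: "bil u (w1 + w2) = bil u w1 + bil u w2"
  by (metis bil_add bil_sym)
lemma bil_scale_r: "bil u (a *\<^sub>R w) = a * bil u w"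
  by (metis bil_scale bil_sym)

lemma OQ_lorQ: "L \<in> OQ \<Longrightarrow> lorQ (L w) = lorQ w"
  by (simp add: OQ_def del: split_paired_All)

theorem proposition3p9:
  fixes Gam :: "('v::euclidean_space) grp set"
    and Xi :: "'v grp set"
    and eta0 :: "'v grp set"
    and s0 :: real
    and x0 :: 'v and R :: real
  assumes subgrp: "is_subgroup Gam"
    and discr: "discrete_set Gam"
    and s0_pos: "s0 > 0"
    and eta0_cpt: "compact eta0" and eta0_N: "eta0 \<subseteq> Nu"
    and Xi_fin: "finite Xi" and Xi_id: "id \<in> Xi" and Xi_G: "Xi \<subseteq> Gr"
    and cond_i: "Gr = {g \<circ> xi \<circ> w | g xi w. g \<in> Gam \<and> xi \<in> Xi \<and> w \<in> Omega eta0 s0}"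
    and cond_ii: "\<forall>xi\<in>Xi. cocompact_in (Gam \<inter> conjN xi) (conjN xi)"
    and cond_iii: "\<forall>eta. compact eta \<and> eta \<subseteq> Nu \<longrightarrow>
         finite {g \<in> Gam. {g \<circ> xi \<circ> w | xi w. xi \<in> Xi \<and> w \<in> Omega eta s0} \<inter> Omega eta s0 \<noteq> {}}"
    and cond_iv: "\<forall>eta. compact eta \<and> eta0 \<subseteq> eta \<and> eta \<subseteq> Nu \<longrightarrow>
         (\<exists>s1 > s0. \<forall>g\<in>Gam. \<forall>xi1\<in>Xi. \<forall>xi2\<in>Xi.
            ((\<lambda>w. g \<circ> xi1 \<circ> w) ` Omega eta s0) \<inter> ((\<lambda>w. xi2 \<circ> w) ` Omega eta s1) \<noteq> {}
            \<longrightarrow> xi1 = xi2 \<and> g \<in> conjNM xi1)"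
  shows "\<exists>c > 0. \<forall>g1\<in>Gam. \<forall>g2\<in>Gam. \<forall>xi1\<in>Xi. \<forall>xi2\<in>Xi. \<forall>x1 x2 r1 r2.
           bruhat_coords (g1 \<circ> xi1) x1 r1 \<longrightarrow> bruhat_coords (g2 \<circ> xi2) x2 r2 \<longrightarrow>
           x1 \<in> cball x0 R \<longrightarrow> x2 \<in> cball x0 R \<longrightarrow> x1 \<noteq> x2 \<longrightarrow>
           norm (x1 - x2) \<ge> c / sqrt (exp r1 * exp r2)"
proof -
  have GamG: "Gam \<subseteq> Gr" and Gam_comp: "\<And>g h. g \<in> Gam \<Longrightarrow> h \<in> Gam \<Longrightarrow> g \<circ> h \<in> Gam"
    and Gam_inv: "\<And>g. g \<in> Gam \<Longrightarrow> inv g \<in> Gam"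
    using subgrp by (auto simp: is_subgroup_def)
  have GrO: "\<And>g. g \<in> Gr \<Longrightarrow> g \<in> OQ" using Gr_OQ by blast
  have "\<forall>xi\<in>Xi. \<exists>C. compact C \<and> C \<subseteq> conjN xi \<and>
          conjN xi = {h \<circ> c | h c. h \<in> Gam \<inter> conjN xi \<and> c \<in> C}"
    using cond_ii by (auto simp: cocompact_in_def)
  from bchoice[OF this] obtain C where C0: "\<forall>xi\<in>Xi. compact (C xi) \<and> C xi \<subseteq> conjN xi \<and>
          conjN xi = {h \<circ> c | h c. h \<in> Gam \<inter> conjN xi \<and> c \<in> C xi}"
    by blast
  have C: "\<And>xi. xi \<in> Xi \<Longrightarrow> compact (C xi) \<and> C xi \<subseteq> conjN xi \<and>
          conjN xi = {h \<circ> c | h c. h \<in> Gam \<inter> conjN xi \<and> c \<in> C xi}"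
    using C0 by blast
  define eta where "eta = eta0 \<union> (\<Union>xi\<in>Xi. (\<lambda>c. inv xi \<circ> c \<circ> xi) ` C xi)"
  have eta_cpt: "compact eta"
    unfolding eta_def
  proof (intro compact_Un eta0_cpt compact_UN Xi_fin)
    fix xi assume xi: "xi \<in> Xi"
    have xO: "xi \<in> OQ" using xi Xi_G GrO by blast
    have "linear (inv xi)" using OQ_inv[OF xO] unfolding OQ_def by blast
    then have "continuous_on (C xi) (\<lambda>c. inv xi \<circ> c \<circ> xi)" by (rule cont_conj)
    then show "compact ((\<lambda>c. inv xi \<circ> c \<circ> xi) ` C xi)"
      using C[OF xi] compact_continuous_image by blast
  qed
  have eta_N: "eta \<subseteq> Nu"
  proof -
    have "inv xi \<circ> c \<circ> xi \<in> Nu" if xi: "xi \<in> Xi" and c: "c \<in> C xi" for xi c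
    proof -
      have "c \<in> conjN xi" using C[OF xi] c by blast
      then obtain h where h: "h \<in> Nu" "c = xi \<circ> h \<circ> inv xi" by (auto simp: conjN_def)
      have xO: "xi \<in> OQ" using xi Xi_G GrO by blast
      have "inv xi \<circ> c \<circ> xi = (inv xi \<circ> xi) \<circ> h \<circ> (inv xi \<circ> xi)" by (simp add: h o_assoc)
      also have "\<dots> = h" using OQ_inv_comp[OF xO] by simp
      finally show ?thesis using h by simp
    qed
    then show ?thesis using eta0_N by (auto simp: eta_def)
  qed
  have "eta0 \<subseteq> eta" unfolding eta_def by (rule Un_upper1)
  then have E: "compact eta \<and> eta0 \<subseteq> eta \<and> eta \<subseteq> Nu" using eta_cpt eta_N by simp
  obtain s1 where s1: "s1 > s0" and iv0: "\<forall>g\<in>Gam. \<forall>xi1\<in>Xi. \<forall>xi2\<in>Xi.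
            ((\<lambda>w. g \<circ> xi1 \<circ> w) ` Omega eta s0) \<inter> ((\<lambda>w. xi2 \<circ> w) ` Omega eta s1) \<noteq> {}
            \<longrightarrow> xi1 = xi2 \<and> g \<in> conjNM xi1"
    using mp[OF spec[OF cond_iv, of eta] E] by blast
  have iv: "\<And>g xi1 xi2. g \<in> Gam \<Longrightarrow> xi1 \<in> Xi \<Longrightarrow> xi2 \<in> Xi \<Longrightarrow>
            ((\<lambda>w. g \<circ> xi1 \<circ> w) ` Omega eta s0) \<inter> ((\<lambda>w. xi2 \<circ> w) ` Omega eta s1) \<noteq> {}
            \<Longrightarrow> xi1 = xi2 \<and> g \<in> conjNM xi1"
    using iv0 by blast
  define o' :: "'v pt" where "o' = (1,0,1)"
  define e :: "'v pt" where "e = (1,0,0)"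
  have decomp: "\<exists>d n. d \<in> Gam \<and> d \<in> conjN xi \<and> n \<in> eta \<and> P = (g \<circ> d \<circ> xi \<circ> n \<circ> ator t) o'"
    if g: "g \<in> Gam" and xi: "xi \<in> Xi" and P2: "lorQ P = 2" and Pb: "bil P ((g \<circ> xi) e) = exp (- t)"
    for g xi P t
  proof -
    have gO: "g \<circ> xi \<in> OQ" using g xi GamG Xi_G GrO OQ_comp by blast
    have xO: "xi \<in> OQ" using xi Xi_G GrO by blast
    define w where "w = inv (g \<circ> xi) P"
    have Pw: "P = (g \<circ> xi) w" using OQ_inv_right[OF gO] by (simp add: w_def)
    have w2: "lorQ w = 2" using OQ_lorQ[OF OQ_inv[OF gO]] P2 by (simp add: w_def)
    have wb: "bil w e = exp (- t)" using Pb OQ_bil[OF gO, of w e] Pw by simp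
    obtain z where wz: "w = uN z (ator t o')" using rep_point[OF w2 wb[unfolded e_def]] by (auto simp: o'_def)
    have "xi \<circ> uN z \<circ> inv xi \<in> conjN xi" by (auto simp: conjN_def Nu_def)
    then obtain d c where d: "d \<in> Gam" "d \<in> conjN xi" and c: "c \<in> C xi" and dc: "xi \<circ> uN z \<circ> inv xi = d \<circ> c"
      using C[OF xi] by blast
    define n where "n = inv xi \<circ> c \<circ> xi"
    have n: "n \<in> eta" using xi c by (auto simp: eta_def n_def)
    have "d \<circ> xi \<circ> n = d \<circ> (xi \<circ> inv xi) \<circ> c \<circ> xi" by (simp add: n_def o_assoc)
    also have "\<dots> = (d \<circ> c) \<circ> xi" using OQ_inv_comp[OF xO] by (simp add: o_assoc)
    also have "\<dots> = xi \<circ> uN z \<circ> (inv xi \<circ> xi)" by (simp add: dc o_assoc)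
    also have "\<dots> = xi \<circ> uN z" using OQ_inv_comp[OF xO] by simp
    finally have "d \<circ> xi \<circ> n = xi \<circ> uN z" .
    then have "P = (g \<circ> d \<circ> xi \<circ> n \<circ> ator t) o'"
      by (simp add: Pw wz o_assoc) (metis comp_apply)
    then show ?thesis using d n by blast
  qed
  show ?thesis
  proof (intro exI[of _ "exp (- s1)"] conjI allI impI ballI)
    show "exp (- s1) > 0" by simp
    fix g1 g2 xi1 xi2 x1 x2 r1 r2
    assume g1: "g1 \<in> Gam" and g2: "g2 \<in> Gam" and xi1: "xi1 \<in> Xi" and xi2: "xi2 \<in> Xi"
      and b1: "bruhat_coords (g1 \<circ> xi1) x1 r1" and b2: "bruhat_coords (g2 \<circ> xi2) x2 r2"
      and neq: "x1 \<noteq> x2"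
    show "norm (x1 - x2) \<ge> exp (- s1) / sqrt (exp r1 * exp r2)"
    proof (rule ccontr)
      assume "\<not> ?thesis"
      then have small: "norm (x1 - x2) < exp (- s1) / sqrt (exp r1 * exp r2)" by simp
      define N1 where "N1 = (g1 \<circ> xi1) e"
      define N2 where "N2 = (g2 \<circ> xi2) e"
      have N1: "N1 = (exp r1 * (norm x1)^2 / 2, exp r1 *\<^sub>R x1, exp r1)"
        using bruhat_e[OF b1] by (simp add: N1_def e_def)
      have N2: "N2 = (exp r2 * (norm x2)^2 / 2, exp r2 *\<^sub>R x2, exp r2)"
        using bruhat_e[OF b2] by (simp add: N2_def e_def)
      define b where "b = bil N1 N2"
      have bv: "b = exp r1 * exp r2 * (norm (x1 - x2))^2 / 2" by (simp add: b_def N1 N2 null_bil)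
      have bpos: "b > 0" using neq by (simp add: bv)
      have "b < (exp (- s1))^2"
      proof -
        have E: "sqrt (exp r1 * exp r2) > 0" by simp
        then have "norm (x1 - x2) * sqrt (exp r1 * exp r2) < exp (- s1)" using small by (simp add: field_simps)
        then have "(norm (x1 - x2) * sqrt (exp r1 * exp r2))^2 < (exp (- s1))^2"
          by (intro power_strict_mono) auto
        then have "(norm (x1 - x2))^2 * (exp r1 * exp r2) < (exp (- s1))^2"
          by (simp add: power_mult_distrib)
        then show ?thesis by (simp add: bv algebra_simps) (smt (verit) exp_gt_zero zero_less_power)
      qed
      then have "sqrt b < sqrt ((exp (- s1))^2)" by (rule real_sqrt_less_mono)
      then have sb: "sqrt b < exp (- s1)" by simp
      define t where "t = - ln (sqrt b)"
      have et: "exp (- t) = sqrt b" using bpos by (simp add: t_def)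
      have "ln (sqrt b) < ln (exp (- s1))" using sb bpos by (subst ln_less_cancel_iff) auto
      then have ts1: "t > s1" by (simp add: t_def)
      define P where "P = (1 / sqrt b) *\<^sub>R (N1 + N2)"
      have l1: "bil N1 N1 = 0" "bil N2 N2 = 0" by (simp_all add: N1 N2 flip: lorQ_bil add: null_lorQ)
      have bsym: "bil N2 N1 = b" using bil_sym b_def by metis
      have sq: "sqrt b * sqrt b = b" using bpos by simp
      have P2: "lorQ P = 2" using bpos
        by (simp add: lorQ_bil P_def bil_scale bil_add bil_scale_r bil_add_r l1 bsym b_def[symmetric])
      have PN1: "bil P N1 = exp (- t)" using bpos
        by (simp add: et P_def bil_scale bil_add l1 bsym) (metis sq divide_self_if mult.commute nonzero_mult_div_cancel_right times_divide_eq_left real_sqrt_gt_0_iff less_irrefl)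
      have PN2: "bil P N2 = exp (- t)" using bpos
        by (simp add: et P_def bil_scale bil_add l1 b_def[symmetric]) (metis sq divide_self_if mult.commute nonzero_mult_div_cancel_right times_divide_eq_left real_sqrt_gt_0_iff less_irrefl)
      obtain d1 n1 where d1: "d1 \<in> Gam" "d1 \<in> conjN xi1" and n1: "n1 \<in> eta"
          and P1: "P = (g1 \<circ> d1 \<circ> xi1 \<circ> n1 \<circ> ator t) o'"
        using decomp[OF g1 xi1 P2 PN1[unfolded N1_def]] by blast
      obtain d2 n2 where d2: "d2 \<in> Gam" "d2 \<in> conjN xi2" and n2: "n2 \<in> eta"
          and P2': "P = (g2 \<circ> d2 \<circ> xi2 \<circ> n2 \<circ> ator t) o'"
        using decomp[OF g2 xi2 P2 PN2[unfolded N2_def]] by blast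
      define G1 where "G1 = g1 \<circ> d1 \<circ> xi1 \<circ> n1 \<circ> ator t"
      define G2 where "G2 = g2 \<circ> d2 \<circ> xi2 \<circ> n2 \<circ> ator t"
      have nG: "n1 \<in> Gr" "n2 \<in> Gr" using n1 n2 eta_N uN_Gr by (auto simp: Nu_def)
      have G1G: "G1 \<in> Gr" unfolding G1_def
        using g1 d1 xi1 GamG Xi_G nG ator_Gr Gr_comp by (meson subsetD)
      have G2G: "G2 \<in> Gr" unfolding G2_def
        using g2 d2 xi2 GamG Xi_G nG ator_Gr Gr_comp by (meson subsetD)
      define k where "k = inv G1 \<circ> G2"
      have kG: "k \<in> Gr" unfolding k_def using G1G G2G Gr_comp Gr_inv by blast
      have "k o' = o'" unfolding k_def using P1 P2' OQ_inv_left[OF GrO[OF G1G]]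
        by (simp add: G1_def G2_def)
      then have kK: "k \<in> Kc" using kG by (simp add: Kc_def o'_def)
      have G1k: "G1 \<circ> k = G2" unfolding k_def using OQ_inv_comp(2)[OF GrO[OF G1G]]
        by (simp add: o_assoc)
      have idK: "id \<in> Kc" using id_Gr by (simp add: Kc_def)
      define gam where "gam = inv (g2 \<circ> d2) \<circ> (g1 \<circ> d1)"
      have gamG: "gam \<in> Gam" unfolding gam_def using g1 g2 d1 d2 Gam_comp Gam_inv by blast
      have g2d2O: "g2 \<circ> d2 \<in> OQ" using g2 d2 GamG GrO OQ_comp by blast
      have w1: "n1 \<circ> ator t \<circ> k \<in> Omega eta s0" unfolding Omega_def
        using n1 kK ts1 s1 by (intro CollectI exI[of _ n1] exI[of _ t] exI[of _ k]) simp
      have w2: "n2 \<circ> ator t \<circ> id \<in> Omega eta s1" unfolding Omega_def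
        using n2 idK ts1 by (intro CollectI exI[of _ n2] exI[of _ t] exI[of _ id]) simp
      have "gam \<circ> xi1 \<circ> (n1 \<circ> ator t \<circ> k) = inv (g2 \<circ> d2) \<circ> (G1 \<circ> k)"
        by (simp add: gam_def G1_def o_assoc)
      also have "\<dots> = (inv (g2 \<circ> d2) \<circ> (g2 \<circ> d2)) \<circ> xi2 \<circ> n2 \<circ> ator t"
        by (simp add: G1k G2_def o_assoc)
      also have "\<dots> = xi2 \<circ> (n2 \<circ> ator t \<circ> id)" using OQ_inv_comp(1)[OF g2d2O] by (simp add: o_assoc)
      finally have "((\<lambda>w. gam \<circ> xi1 \<circ> w) ` Omega eta s0) \<inter> ((\<lambda>w. xi2 \<circ> w) ` Omega eta s1) \<noteq> {}"
        using w1 w2 by blast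
      then have xeq: "xi1 = xi2" and gamN: "gam \<in> conjNM xi1" using iv[OF gamG xi1 xi2] by auto
      obtain h m where h: "h \<in> Nu" and m: "m \<in> Mc" and gh: "gam = xi1 \<circ> h \<circ> m \<circ> inv xi1"
        using gamN by (auto simp: conjNM_def)
      have x1O: "xi1 \<in> OQ" using xi1 Xi_G GrO by blast
      have "gam (xi1 e) = xi1 e"
        using gh OQ_inv_left[OF x1O] Mc_e[OF m] Nu_e[OF h] by (simp add: e_def)
      then have "(g1 \<circ> d1) (xi1 e) = (g2 \<circ> d2) (xi1 e)"
        unfolding gam_def using OQ_inv_right[OF g2d2O] by (metis comp_apply)
      moreover have "dd (xi1 e) = xi1 e" if dd: "dd \<in> conjN xi1" for dd
      proof -
        obtain h' where h': "h' \<in> Nu" "dd = xi1 \<circ> h' \<circ> inv xi1" using dd by (auto simp: conjN_def)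
        then show ?thesis using OQ_inv_left[OF x1O] Nu_e[OF h'(1)] by (simp add: e_def)
      qed
      ultimately have "N1 = N2" using d1(2) d2(2) xeq
        by (simp add: N1_def N2_def) (metis comp_apply)
      then have eqs: "exp r1 *\<^sub>R x1 = exp r2 *\<^sub>R x2 \<and> exp r1 = exp r2"
        unfolding N1 N2 prod.inject by blast
      then have "exp r1 *\<^sub>R x1 = exp r1 *\<^sub>R x2" by metis
      then have "x1 = x2" by simp
      then show False using neq by simp
    qed
  qed
qed

end
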